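(* Under the standing assumptions below (Assumptions 1 and 2), let $(Q_*,\mu_* )\in\mathcal C\times\mathcal P(\mathsf X)$ be a fixed point of the MFE operator $H$ (i.e. the limit of the value iteration $(Q_{n+1},\mu_{n+1})=H(Q_n,\mu_n)$). For each $x$, $a\mapsto Q_*(x,a)$ has a unique minimizer $f^*(x)=\arg\min_{a'\in\mathsf A}Q_*(x,a')$; define the policy $\pi_*(\cdot|x)=\delta_{f^*(x)}$. Then $(\pi_*,\mu_* )$ is a mean-field equilibrium for the discounted cost criterion.
   Context: Setting. $\mathsf{X}$ is a Polish space with metric $d_{\mathsf X}$; $\mathsf{A}\subset\mathbb{R}^d$ is compact, with Euclidean norm $\|\cdot\|$. $\mathcal{P}(\mathsf X)$ is the set of Borel probability measures on $\mathsf X$. $p:\mathsf X\times\mathsf A\times\mathcal P(\mathsf X)\to\mathcal P(\mathsf X)$ is a measurable transition kernel and $c:\mathsf X\times\mathsf A\times\mathcal P(\mathsf X)\to[0,\infty)$ a measurable one-stage cost. $\beta\in(0,1)$ is a discount factor. Mean-field equilibrium. A policy is a measurable stochastic kernel $\pi:\mathsf X\to\mathcal P(\mathsf A)$; $\Pi$ is the set of policies. For a fixed state-measure $\mu$ and initial distribution $\mu_0$, the state-action process evolves as $x(0)\sim\mu_0$, $a(t)\sim\pi(\cdot|x(t))$, $x(t+1)\sim p(\cdot|x(t),a(t),\mu)$, and $J_\mu(\pi)=E^\pi[\sum_{t\ge0}\beta^tc(x(t),a(t),\mu)]$. $\Psi(\mu)$ is the set of $\pi\in\Pi$ minimizing $J_\mu$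 over $\Pi$ when $\mu_0=\mu$. $\Lambda(\pi)$ is the set of $\nu\in\mathcal P(\mathsf X)$ with $\nu(\cdot)=\int_{\mathsf X\times\mathsf A}p(\cdot|x,a,\nu)\pi(da|x)\nu(dx)$. A pair $(\pi_*,\mu_* )$ is a mean-field equilibrium if $\pi_*\in\Psi(\mu_* )$ and $\mu_*\in\Lambda(\pi_* )$. Notation. $w:\mathsf X\times\mathsf A\to[1,\infty)$ continuous weight. $u_{\min}(x)=\inf_a u(x,a)$, $u_{\max}(x)=\sup_a u(x,a)$. $\|v\|_w=\sup_{x,a}|v(x,a)|/w(x,a)$; $\|u\|_{w_{\max}}=\sup_x|u(x)|/w_{\max}(x)$. $B(\mathsf X,K)$: measurable $u$ with $\|u\|_{w_{\max}}\le K$. $\|g\|_{\mathrm{Lip}}$ the Lipschitz constant; $\mathrm{Lip}(\mathsf X,K)$ continuous $g$ with $\|g\|_{\mathrm{Lip}}\le K$. $W_1$ the Wasserstein distance of order 1. Assumption 1 (with $\xi=\beta$). (a) $c$ continuous, $\|c(\cdot,\cdot,\mu)-c(\cdot,\cdot,\hat\mu)\|_w\le L_1W_1(\mu,\hat\mu)$, $\sup_{(a,\mu)}|c(x,a,\mu)-c(\hat x,a,\mu)|\le L_2d_{\mathsf X}(x,\hat x)$. (b) $p$ weakly continuous; $\sup_xW_1(p(\cdot|x,a,\mu),p(\cdot|x,\hat a,\hat\mu))\le K_1(\|a-\hat a\|+W_1(\mu,\hat\mu))$; $\sup_\mu W_1(p(\cdot|x,a,\mu),p(\cdot|\hat x,\hat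 a,\mu))\le K_2(d_{\mathsf X}(x,\hat x)+\|a-\hat a\|)$. (c) $\mathsf A$ convex. (d) $c\le Mw$ and $\int w_{\max}(y)p(dy|x,a,\mu)\le\alpha w(x,a)$, $M,\alpha\ge0$. (e) With $F(x,v,\mu,a)=c(x,a,\mu)+\beta\int v\,dp(\cdot|x,a,\mu)$ and $\mathcal F$ the nonnegative functions in $\mathrm{Lip}(\mathsf X,\frac{L_2}{1-\beta K_2})\cap B(\mathsf X,\frac{M}{1-\beta\alpha})$: for $v\in\mathcal F$, $a\mapsto F(x,v,\mu,a)$ is differentiable and $\rho$-strongly convex ($\rho>0$), and $\sup_a\|\nabla F(x,v,\mu,a)-\nabla F(\hat x,\hat v,\hat\mu,a)\|\le K_F(d_{\mathsf X}(x,\hat x)+\|v-\hat v\|_{w_{\max}}+W_1(\mu,\hat\mu))$ for $v,\hat v\in\mathcal F$. Assumption 2: $k=\max\{\beta\alpha+\frac{K_F}{\rho}K_1,\ L_1+\beta\frac{L_2}{1-\beta K_2}K_1+(\frac{K_F}{\rho}+1)K_1+K_2+\frac{K_F}{\rho}\}<1$. Objects. $\mathcal C=\{Q:\mathsf X\times\mathsf A\to[0,\infty)$ measurable $:\|Q\|_w\le\frac{M}{1-\beta\alpha},\ \|Q_{\min}\|_{\mathrm{Lip}}\le\frac{L_2}{1-\beta K_2}\}$. $f(x,Q,\mu)$ is the unique minimizer over $a$ of $F(x,Q_{\min},\mu,a)$. $H(Q,\mu)=(H_1,H_2)$ with $H_1(Q,\mu)(x,a)=c(x,a,\mu)+\beta\int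 Q_{\min}(y)p(dy|x,a,\mu)$ and $H_2(Q,\mu)(\cdot)=\int p(\cdot|x,f(x,Q,\mu),\mu)\mu(dx)$. *)

theory Defs
  imports "HOL-Probability.Probability"
begin

definition Prob :: "('x::metric_space) measure set" where
  "Prob = {\<mu>. prob_space \<mu> \<and> sets \<mu> = sets borel}"

definition weak_conv :: "(nat \<Rightarrow> ('x::metric_space) measure) \<Rightarrow> 'x measure \<Rightarrow> bool" where
  "weak_conv \<mu>s \<mu> \<longleftrightarrow>
     (\<forall>g :: 'x \<Rightarrow> real. continuous_on UNIV g \<and> bounded (range g) \<longrightarrow>
        (\<lambda>n. integral\<^sup>L (\<mu>s n) g) \<longlonglongrightarrow> integral\<^sup>L \<mu> g)"

definition couplings :: "('x::metric_space) measure \<Rightarrow> 'x measure \<Rightarrow> ('x \<times> 'x) measure set" where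
  "couplings \<mu> \<nu> = {\<gamma>. prob_space \<gamma> \<and> sets \<gamma> = sets (borel \<Otimes>\<^sub>M borel) \<and>
                         distr \<gamma> borel fst = \<mu> \<and> distr \<gamma> borel snd = \<nu>}"

definition W1 :: "('x::metric_space) measure \<Rightarrow> 'x measure \<Rightarrow> ennreal" where
  "W1 \<mu> \<nu> = (INF \<gamma>\<in>couplings \<mu> \<nu>. \<integral>\<^sup>+ z. ennreal (dist (fst z) (snd z)) \<partial>\<gamma>)"

definition wmax :: "('x \<Rightarrow> 'a \<Rightarrow> real) \<Rightarrow> 'a set \<Rightarrow> 'x \<Rightarrow> real" where
  "wmax w A x = (SUP a\<in>A. w x a)"

definition wmax_norm :: "('x \<Rightarrow> 'a \<Rightarrow> real) \<Rightarrow> 'a set \<Rightarrow> ('x \<Rightarrow> real) \<Rightarrow> real" where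
  "wmax_norm w A u = (SUP x. \<bar>u x\<bar> / wmax w A x)"

definition Lip :: "real \<Rightarrow> (('x::metric_space) \<Rightarrow> real) set" where
  "Lip K = {g. continuous_on UNIV g \<and> (\<forall>x y. \<bar>g x - g y\<bar> \<le> K * dist x y)}"

definition Bnd :: "('x \<Rightarrow> 'a \<Rightarrow> real) \<Rightarrow> 'a set \<Rightarrow> real \<Rightarrow> (('x::metric_space) \<Rightarrow> real) set" where
  "Bnd w A K = {u. u \<in> borel_measurable borel \<and> (\<forall>x. \<bar>u x\<bar> \<le> K * wmax w A x)}"

definition strongly_convex_on :: "'a set \<Rightarrow> real \<Rightarrow> (('a::real_normed_vector) \<Rightarrow> real) \<Rightarrow> bool" where
  "strongly_convex_on A \<rho> g \<longleftrightarrow>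
     (\<forall>a\<in>A. \<forall>b\<in>A. \<forall>t::real. 0 \<le> t \<and> t \<le> 1 \<longrightarrow>
        g (t *\<^sub>R a + (1 - t) *\<^sub>R b) \<le> t * g a + (1 - t) * g b - \<rho> / 2 * t * (1 - t) * (norm (a - b))\<^sup>2)"

definition Fop :: "('x \<Rightarrow> 'a \<Rightarrow> 'x measure \<Rightarrow> real) \<Rightarrow> ('x \<Rightarrow> 'a \<Rightarrow> 'x measure \<Rightarrow> 'x measure) \<Rightarrow> real
    \<Rightarrow> 'x \<Rightarrow> ('x \<Rightarrow> real) \<Rightarrow> 'x measure \<Rightarrow> 'a \<Rightarrow> real" where
  "Fop c p \<beta> x v \<mu> a = c x a \<mu> + \<beta> * integral\<^sup>L (p x a \<mu>) v"

definition Qmin :: "'a set \<Rightarrow> ('x \<Rightarrow> 'a \<Rightarrow> real) \<Rightarrow> 'x \<Rightarrow> real" where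
  "Qmin A Q x = (INF a\<in>A. Q x a)"

definition fsel :: "('x \<Rightarrow> 'a \<Rightarrow> 'x measure \<Rightarrow> real) \<Rightarrow> ('x \<Rightarrow> 'a \<Rightarrow> 'x measure \<Rightarrow> 'x measure) \<Rightarrow> real
    \<Rightarrow> 'a set \<Rightarrow> 'x \<Rightarrow> ('x \<Rightarrow> 'a \<Rightarrow> real) \<Rightarrow> 'x measure \<Rightarrow> 'a" where
  "fsel c p \<beta> A x Q \<mu> =
     (THE a. a \<in> A \<and> (\<forall>b\<in>A. Fop c p \<beta> x (Qmin A Q) \<mu> a \<le> Fop c p \<beta> x (Qmin A Q) \<mu> b))"

definition H1 :: "('x \<Rightarrow> 'a \<Rightarrow> 'x measure \<Rightarrow> real) \<Rightarrow> ('x \<Rightarrow> 'a \<Rightarrow> 'x measure \<Rightarrow> 'x measure) \<Rightarrow> real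
    \<Rightarrow> 'a set \<Rightarrow> ('x \<Rightarrow> 'a \<Rightarrow> real) \<Rightarrow> 'x measure \<Rightarrow> 'x \<Rightarrow> 'a \<Rightarrow> real" where
  "H1 c p \<beta> A Q \<mu> x a = c x a \<mu> + \<beta> * integral\<^sup>L (p x a \<mu>) (Qmin A Q)"

definition H2 :: "('x \<Rightarrow> 'a \<Rightarrow> 'x measure \<Rightarrow> real) \<Rightarrow> ('x \<Rightarrow> 'a \<Rightarrow> 'x measure \<Rightarrow> 'x measure) \<Rightarrow> real
    \<Rightarrow> 'a set \<Rightarrow> ('x \<Rightarrow> 'a \<Rightarrow> real) \<Rightarrow> ('x::topological_space) measure \<Rightarrow> 'x measure" where
  "H2 c p \<beta> A Q \<mu> = measure_of UNIV (sets borel)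
      (\<lambda>B. \<integral>\<^sup>+ x. emeasure (p x (fsel c p \<beta> A x Q \<mu>) \<mu>) B \<partial>\<mu>)"

definition Cset :: "('x \<Rightarrow> 'a \<Rightarrow> real) \<Rightarrow> 'a set \<Rightarrow> real \<Rightarrow> real \<Rightarrow> real \<Rightarrow> real \<Rightarrow> real
    \<Rightarrow> (('x::metric_space) \<Rightarrow> ('a::euclidean_space) \<Rightarrow> real) set" where
  "Cset w A M \<beta> \<alpha> L2 K2 =
     {Q. (\<lambda>(x,a). Q x a) \<in> borel_measurable (borel \<Otimes>\<^sub>M restrict_space borel A)
       \<and> (\<forall>x. \<forall>a\<in>A. 0 \<le> Q x a \<and> \<bar>Q x a\<bar> \<le> M / (1 - \<beta> * \<alpha>) * w x a)
       \<and> (\<forall>x y. \<bar>Qmin A Q x - Qmin A Q y\<bar> \<le> L2 / (1 - \<beta> * K2) * dist x y)}"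

text \<open>Policies: measurable stochastic kernels from X to P(A) (probability measures on the
  ambient Euclidean space concentrated on A).\<close>
definition Policies :: "'a set \<Rightarrow> (('x::topological_space) \<Rightarrow> ('a::topological_space) measure) set" where
  "Policies A = {\<pi>. \<pi> \<in> borel \<rightarrow>\<^sub>M prob_algebra borel \<and> (\<forall>x. emeasure (\<pi> x) A = 1)}"

text \<open>Law of the state x(t) when mu is frozen, x(0) ~ mu0, a(t) ~ pi(.|x(t)),
  x(t+1) ~ p(.|x(t),a(t),mu).\<close>
primrec state_law :: "('x \<Rightarrow> 'a \<Rightarrow> 'x measure \<Rightarrow> 'x measure) \<Rightarrow> ('x \<Rightarrow> 'a measure) \<Rightarrow> 'x measure
    \<Rightarrow> ('x::topological_space) measure \<Rightarrow> nat \<Rightarrow> 'x measure" where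
  "state_law p \<pi> \<mu> \<mu>0 0 = \<mu>0"
| "state_law p \<pi> \<mu> \<mu>0 (Suc t) = measure_of UNIV (sets borel)
      (\<lambda>B. \<integral>\<^sup>+ x. \<integral>\<^sup>+ a. emeasure (p x a \<mu>) B \<partial>(\<pi> x) \<partial>(state_law p \<pi> \<mu> \<mu>0 t))"

text \<open>J_mu(pi) = E^pi [ sum_t beta^t c(x(t),a(t),mu) ] (computed through the laws of
  (x(t),a(t)) and monotone convergence; extended-real valued).\<close>
definition Jcost :: "('x \<Rightarrow> 'a \<Rightarrow> 'x measure \<Rightarrow> real) \<Rightarrow> ('x \<Rightarrow> 'a \<Rightarrow> 'x measure \<Rightarrow> 'x measure) \<Rightarrow> real
    \<Rightarrow> ('x \<Rightarrow> 'a measure) \<Rightarrow> 'x measure \<Rightarrow> ('x::topological_space) measure \<Rightarrow> ennreal" where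
  "Jcost c p \<beta> \<pi> \<mu> \<mu>0 =
     (\<Sum>t. ennreal (\<beta> ^ t) * (\<integral>\<^sup>+ x. \<integral>\<^sup>+ a. ennreal (c x a \<mu>) \<partial>(\<pi> x) \<partial>(state_law p \<pi> \<mu> \<mu>0 t)))"

definition Psi :: "('x \<Rightarrow> 'a \<Rightarrow> 'x measure \<Rightarrow> real) \<Rightarrow> ('x \<Rightarrow> 'a \<Rightarrow> 'x measure \<Rightarrow> 'x measure) \<Rightarrow> real
    \<Rightarrow> ('a::topological_space) set \<Rightarrow> ('x::topological_space) measure \<Rightarrow> ('x \<Rightarrow> 'a measure) set" where
  "Psi c p \<beta> A \<mu> = {\<pi> \<in> Policies A. \<forall>\<pi>'\<in>Policies A. Jcost c p \<beta> \<pi> \<mu> \<mu> \<le> Jcost c p \<beta> \<pi>' \<mu> \<mu>}"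

definition Lambda :: "('x \<Rightarrow> 'a \<Rightarrow> 'x measure \<Rightarrow> 'x measure) \<Rightarrow> ('x \<Rightarrow> 'a measure)
    \<Rightarrow> ('x::metric_space) measure set" where
  "Lambda p \<pi> = {\<nu> \<in> Prob. \<forall>B \<in> sets borel.
       emeasure \<nu> B = (\<integral>\<^sup>+ x. \<integral>\<^sup>+ a. emeasure (p x a \<nu>) B \<partial>(\<pi> x) \<partial>\<nu>)}"

definition is_MFE :: "('x \<Rightarrow> 'a \<Rightarrow> 'x measure \<Rightarrow> real) \<Rightarrow> ('x \<Rightarrow> 'a \<Rightarrow> 'x measure \<Rightarrow> 'x measure) \<Rightarrow> real
    \<Rightarrow> ('a::topological_space) set \<Rightarrow> ('x \<Rightarrow> 'a measure) \<Rightarrow> ('x::metric_space) measure \<Rightarrow> bool" where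
  "is_MFE c p \<beta> A \<pi> \<mu> \<longleftrightarrow> \<pi> \<in> Psi c p \<beta> A \<mu> \<and> \<mu> \<in> Lambda p \<pi>"

end

theory Submission
  imports Defs
begin

lemma nn_integral_return_any:
  fixes y :: "'a::metric_space"
  shows "(\<integral>\<^sup>+a. g a \<partial>return borel y) = g y"
proof -
  have "AE a in return borel y. a = y"
    by (subst AE_return) auto
  then have "(\<integral>\<^sup>+a. g a \<partial>return borel y) = (\<integral>\<^sup>+a. g y \<partial>return borel y)"
    by (intro nn_integral_cong_AE) auto
  also have "\<dots> = g y" by (simp add: nn_integral_const)
  finally show ?thesis .
qed

lemma W1_self:
  fixes \<mu> :: "'x::{metric_space,second_countable_topology} measure"
  assumes "\<mu> \<in> Prob"
  shows "W1 \<mu> \<mu> = 0"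
proof -
  have P: "prob_space \<mu>" and S: "sets \<mu> = sets borel" using assms by (auto simp: Prob_def)
  define \<gamma> where "\<gamma> = distr \<mu> (borel \<Otimes>\<^sub>M borel) (\<lambda>x. (x, x))"
  have m0: "(\<lambda>x. (x, x)) \<in> borel \<rightarrow>\<^sub>M (borel \<Otimes>\<^sub>M borel)"
    by (intro measurable_Pair measurable_ident_sets) auto
  have m: "(\<lambda>x. (x, x)) \<in> \<mu> \<rightarrow>\<^sub>M (borel \<Otimes>\<^sub>M borel)"
    using m0 measurable_cong_sets[OF S refl] by blast
  have "\<gamma> \<in> couplings \<mu> \<mu>"
    unfolding couplings_def
  proof (intro CollectI conjI)
    show "prob_space \<gamma>" unfolding \<gamma>_def by (rule prob_space.prob_space_distr[OF P m])
    show "sets \<gamma> = sets (borel \<Otimes>\<^sub>M borel)" by (simp add: \<gamma>_def)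
    have "distr \<gamma> borel fst = distr \<mu> borel (\<lambda>x. x)"
      unfolding \<gamma>_def using m by (subst distr_distr) (auto simp: comp_def)
    also have "\<dots> = \<mu>" using S by (simp add: distr_id2)
    finally show "distr \<gamma> borel fst = \<mu>" .
    have "distr \<gamma> borel snd = distr \<mu> borel (\<lambda>x. x)"
      unfolding \<gamma>_def using m by (subst distr_distr) (auto simp: comp_def)
    also have "\<dots> = \<mu>" using S by (simp add: distr_id2)
    finally show "distr \<gamma> borel snd = \<mu>" .
  qed
  moreover have "(\<integral>\<^sup>+ z. ennreal (dist (fst z) (snd z)) \<partial>\<gamma>) = 0"
  proof -
    have "(\<lambda>z. dist (fst z) (snd z)) \<in> borel_measurable (borel \<Otimes>\<^sub>M borel :: ('x \<times> 'x) measure)"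
      by (rule borel_measurable_dist[OF measurable_fst measurable_snd])
    then have "(\<integral>\<^sup>+ z. ennreal (dist (fst z) (snd z)) \<partial>\<gamma>) = (\<integral>\<^sup>+ x. ennreal (dist x x) \<partial>\<mu>)"
      unfolding \<gamma>_def
      by (subst nn_integral_distr[OF m]) (auto intro: measurable_compose[OF _ measurable_ennreal])
    then show ?thesis by simp
  qed
  ultimately have "W1 \<mu> \<mu> \<le> 0" unfolding W1_def by (metis (no_types, lifting) INF_lower2 order_refl)
  then show ?thesis by simp
qed
lemma ennreal_le_split:
  fixes r s :: real
  assumes "0 \<le> s" shows "ennreal r \<le> ennreal (r - s) + ennreal s"
proof (cases "0 \<le> r - s")
  case True
  then have "ennreal (r - s) + ennreal s = ennreal r" using assms by (simp add: ennreal_plus[symmetric])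
  then show ?thesis by simp
next
  case False
  then have "ennreal r \<le> ennreal s" by (intro ennreal_leI) simp
  then show ?thesis by (simp add: add_increasing)
qed

lemma ennreal_minus_le:
  fixes r s :: real
  assumes h: "ennreal r \<le> R + ennreal s" and s: "0 \<le> s"
  shows "ennreal (r - s) \<le> R"
proof (cases R)
  case (real q)
  have e: "ennreal q + ennreal s = ennreal (q + s)" using real s by (simp add: ennreal_plus)
  have "ennreal r \<le> ennreal (q + s)" using h real e by simp
  then have "r \<le> q + s" using ennreal_le_iff[of "q + s" r] real s by simp
  then have "ennreal (r - s) \<le> ennreal q" by (intro ennreal_leI) simp
  then show ?thesis using real by simp
next
  case top then show ?thesis by simp
qed

lemma dir_deriv:
  fixes g :: "'a::euclidean_space \<Rightarrow> real"
  assumes der: "(g has_derivative (\<lambda>h. D \<bullet> h)) (at a within A)"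
    and cA: "convex A" and aA: "a \<in> A" and bA: "b \<in> A"
  shows "((\<lambda>t. (g (a + t *\<^sub>R (b - a)) - g a) / t) \<longlongrightarrow> D \<bullet> (b - a)) (at_right 0)"
proof -
  define \<phi> where "\<phi> = (\<lambda>t::real. a + t *\<^sub>R (b - a))"
  have d\<phi>: "(\<phi> has_derivative (\<lambda>t. t *\<^sub>R (b - a))) (at 0 within {0..1})"
    unfolding \<phi>_def by (auto intro!: derivative_eq_intros)
  have sub: "\<phi> ` {0..1} \<subseteq> A"
  proof
    fix y assume "y \<in> \<phi> ` {0..1}"
    then obtain t where t: "0 \<le> t" "t \<le> 1" "y = a + t *\<^sub>R (b - a)" unfolding \<phi>_def by auto
    have "y = (1 - t) *\<^sub>R a + t *\<^sub>R b" using t by (simp add: algebra_simps)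
    then show "y \<in> A" using cA aA bA t by (metis convexD diff_ge_0_iff_ge le_add_diff_inverse2 add.commute)
  qed
  have "\<phi> 0 = a" unfolding \<phi>_def by simp
  then have dg: "(g has_derivative (\<lambda>h. D \<bullet> h)) (at (\<phi> 0) within \<phi> ` {0..1})"
    using has_derivative_subset[OF der sub] by simp
  have H: "((\<lambda>t. g (\<phi> t)) has_derivative (\<lambda>t. D \<bullet> (t *\<^sub>R (b - a)))) (at 0 within {0..1})"
    by (rule has_derivative_in_compose[OF d\<phi> dg])
  have "((\<lambda>t. g (\<phi> t)) has_field_derivative (D \<bullet> (b - a))) (at 0 within {0..1})"
  proof -
    have "(\<lambda>t. t * (D \<bullet> (b - a))) = (*) (D \<bullet> (b - a))" by (auto simp: mult.commute)
    with H show ?thesis unfolding has_field_derivative_def by simp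
  qed
  then have "((\<lambda>t. (g (\<phi> t) - g (\<phi> 0)) / (t - 0)) \<longlongrightarrow> D \<bullet> (b - a)) (at 0 within {0..1})"
    by (simp add: has_field_derivative_iff)
  moreover have "at (0::real) within {0..1} = at_right 0" by (rule at_within_Icc_at_right) simp
  ultimately show ?thesis unfolding \<phi>_def by simp
qed

lemma sc_deriv_ineq:
  fixes g :: "'a::euclidean_space \<Rightarrow> real"
  assumes der: "(g has_derivative (\<lambda>h. D \<bullet> h)) (at a within A)"
    and cA: "convex A" and aA: "a \<in> A" and bA: "b \<in> A"
    and sc: "strongly_convex_on A \<rho> g"
  shows "D \<bullet> (b - a) \<le> g b - g a - \<rho> / 2 * (norm (b - a))\<^sup>2"
proof -
  let ?N = "(norm (b - a))\<^sup>2"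
  have lim1: "((\<lambda>t. (g (a + t *\<^sub>R (b - a)) - g a) / t) \<longlongrightarrow> D \<bullet> (b - a)) (at_right 0)"
    by (rule dir_deriv[OF der cA aA bA])
  have lim2: "((\<lambda>t::real. g b - g a - \<rho> / 2 * (1 - t) * ?N) \<longlongrightarrow> g b - g a - \<rho> / 2 * (1 - 0) * ?N) (at_right 0)"
    by (intro tendsto_intros)
  have ev: "eventually (\<lambda>t. (g (a + t *\<^sub>R (b - a)) - g a) / t \<le> g b - g a - \<rho> / 2 * (1 - t) * ?N) (at_right 0)"
    unfolding eventually_at_right_field
  proof (intro exI[of _ 1] conjI allI impI)
    fix t :: real assume t: "0 < t" "t < 1"
    have eq: "a + t *\<^sub>R (b - a) = t *\<^sub>R b + (1 - t) *\<^sub>R a" by (simp add: algebra_simps)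
    have "g (t *\<^sub>R b + (1 - t) *\<^sub>R a) \<le> t * g b + (1 - t) * g a - \<rho> / 2 * t * (1 - t) * (norm (b - a))\<^sup>2"
      using sc bA aA t unfolding strongly_convex_on_def by auto
    then have "g (a + t *\<^sub>R (b - a)) - g a \<le> t * (g b - g a - \<rho> / 2 * (1 - t) * ?N)"
      unfolding eq by (simp add: algebra_simps)
    then show "(g (a + t *\<^sub>R (b - a)) - g a) / t \<le> g b - g a - \<rho> / 2 * (1 - t) * ?N"
      using t by (simp add: divide_le_eq mult.commute)
  qed simp
  have "D \<bullet> (b - a) \<le> g b - g a - \<rho> / 2 * (1 - 0) * ?N"
    by (rule tendsto_le[OF _ lim2 lim1 ev]) simp
  then show ?thesis by simp
qed

lemma min_deriv_ineq:
  fixes g :: "'a::euclidean_space \<Rightarrow> real"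
  assumes der: "(g has_derivative (\<lambda>h. D \<bullet> h)) (at a within A)"
    and cA: "convex A" and aA: "a \<in> A" and bA: "b \<in> A"
    and mn: "\<forall>c\<in>A. g a \<le> g c"
  shows "0 \<le> D \<bullet> (b - a)"
proof -
  have lim1: "((\<lambda>t. (g (a + t *\<^sub>R (b - a)) - g a) / t) \<longlongrightarrow> D \<bullet> (b - a)) (at_right 0)"
    by (rule dir_deriv[OF der cA aA bA])
  have ev: "eventually (\<lambda>t. 0 \<le> (g (a + t *\<^sub>R (b - a)) - g a) / t) (at_right 0)"
    unfolding eventually_at_right_field
  proof (intro exI[of _ 1] conjI allI impI)
    fix t :: real assume t: "0 < t" "t < 1"
    have eq: "a + t *\<^sub>R (b - a) = (1 - t) *\<^sub>R a + t *\<^sub>R b" by (simp add: algebra_simps)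
    have "a + t *\<^sub>R (b - a) \<in> A" unfolding eq using cA aA bA t by (intro convexD) auto
    then have "g a \<le> g (a + t *\<^sub>R (b - a))" using mn by blast
    then show "0 \<le> (g (a + t *\<^sub>R (b - a)) - g a) / t" using t by simp
  qed simp
  show ?thesis by (rule tendsto_lowerbound[OF lim1 ev]) simp
qed

lemma sc_unique_min:
  fixes g :: "'a::euclidean_space \<Rightarrow> real"
  assumes cA: "convex A" and comp: "compact A" and ne: "A \<noteq> {}"
    and cont: "continuous_on A g" and sc: "strongly_convex_on A \<rho> g" and rho: "0 < \<rho>"
  shows "\<exists>!a. a \<in> A \<and> (\<forall>b\<in>A. g a \<le> g b)"
proof -
  obtain a where a: "a \<in> A" "\<forall>b\<in>A. g a \<le> g b"
    using continuous_attains_inf[OF comp ne cont] by blast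
  moreover have "a' = a" if a': "a' \<in> A" "\<forall>b\<in>A. g a' \<le> g b" for a'
  proof (rule ccontr)
    assume ne: "a' \<noteq> a"
    let ?m = "(1/2) *\<^sub>R a' + (1 - 1/2) *\<^sub>R a"
    have mA: "?m \<in> A" using cA a a' by (intro convexD) auto
    have "g ?m \<le> 1/2 * g a' + (1 - 1/2) * g a - \<rho> / 2 * (1/2) * (1 - 1/2) * (norm (a' - a))\<^sup>2"
    proof -
      have "\<forall>t. 0 \<le> t \<and> t \<le> 1 \<longrightarrow> g (t *\<^sub>R a' + (1 - t) *\<^sub>R a)
            \<le> t * g a' + (1 - t) * g a - \<rho> / 2 * t * (1 - t) * (norm (a' - a))\<^sup>2"
        using sc a(1) a'(1) unfolding strongly_convex_on_def by blast
      then show ?thesis by (rule allE[where x="1/2"]) simp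
    qed
    moreover have "g a = g a'" using a a' by (meson order_antisym)
    moreover have "0 < (norm (a' - a))\<^sup>2" using ne by simp
    then have "0 < \<rho> * (norm (a' - a))\<^sup>2" using rho by simp
    ultimately have "g ?m < g a" by (simp add: field_simps)
    with a mA show False by auto
  qed
  ultimately show ?thesis by blast
qed

lemma policy_AE:
  fixes \<pi> :: "'x::topological_space \<Rightarrow> 'a::topological_space measure"
  assumes \<pi>: "\<pi> \<in> Policies A" and A: "A \<in> sets borel"
  shows "prob_space (\<pi> x)" "sets (\<pi> x) = sets borel" "AE a in \<pi> x. a \<in> A"
    "\<pi> x \<in> space (prob_algebra borel)"
proof -
  have m: "\<pi> \<in> borel \<rightarrow>\<^sub>M prob_algebra borel" and e: "emeasure (\<pi> x) A = 1"
    using \<pi> by (auto simp: Policies_def)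
  show sp: "\<pi> x \<in> space (prob_algebra borel)" using measurable_space[OF m] by simp
  then show P: "prob_space (\<pi> x)" and S: "sets (\<pi> x) = sets borel" by (auto simp: space_prob_algebra)
  have Ae: "A \<in> sets (\<pi> x)" using S A by simp
  show "AE a in \<pi> x. a \<in> A"
    using prob_space.AE_in_set_eq_1[OF P Ae] e by (simp add: measure_def)
qed

lemma state_law_bind:
  fixes p :: "'x::topological_space \<Rightarrow> 'a::topological_space \<Rightarrow> 'x measure \<Rightarrow> 'x measure"
  assumes Pm: "(\<lambda>(x,a). P x a) \<in> borel \<Otimes>\<^sub>M borel \<rightarrow>\<^sub>M prob_algebra borel"
    and pP: "\<And>x a. a \<in> A \<Longrightarrow> p x a \<mu> = P x a"
    and A: "A \<in> sets borel"
    and \<pi>: "\<pi> \<in> Policies A"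
    and S: "state_law p \<pi> \<mu> \<mu>0 t \<in> space (prob_algebra borel)"
  shows "state_law p \<pi> \<mu> \<mu>0 (Suc t) = bind (state_law p \<pi> \<mu> \<mu>0 t) (\<lambda>x. bind (\<pi> x) (P x))"
proof -
  let ?S = "state_law p \<pi> \<mu> \<mu>0 t"
  let ?K = "\<lambda>x. bind (\<pi> x) (P x)"
  have \<pi>m: "\<pi> \<in> borel \<rightarrow>\<^sub>M prob_algebra borel" using \<pi> by (simp add: Policies_def)
  have Km: "?K \<in> borel \<rightarrow>\<^sub>M prob_algebra borel"
    by (rule measurable_bind_prob_space2[OF \<pi>m Pm])
  have Pxm: "P x \<in> borel \<rightarrow>\<^sub>M prob_algebra borel" for x
    using measurable_Pair2[OF Pm, of x] by simp
  have sets_b: "sets (bind ?S ?K) = sets borel" by (rule sets_bind'[OF S Km])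
  then have space_b: "space (bind ?S ?K) = UNIV" by (metis sets_eq_imp_space_eq space_borel)
  have "bind ?S ?K = measure_of UNIV (sets borel) (emeasure (bind ?S ?K))"
    by (metis measure_of_of_measure sets_b space_b)
  also have "\<dots> = measure_of UNIV (sets borel)
      (\<lambda>B. \<integral>\<^sup>+ x. \<integral>\<^sup>+ a. emeasure (p x a \<mu>) B \<partial>(\<pi> x) \<partial>?S)"
  proof (rule measure_of_eq)
    show "sets borel \<subseteq> Pow UNIV" by simp
    fix B :: "'x set" assume "B \<in> sigma_sets UNIV (sets borel)"
    then have B: "B \<in> sets borel" by (metis sets.sigma_sets_eq space_borel)
    have "emeasure (bind ?S ?K) B = \<integral>\<^sup>+ x. emeasure (?K x) B \<partial>?S"
      by (rule emeasure_bind_prob_algebra[OF S Km B])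
    also have "\<dots> = \<integral>\<^sup>+ x. \<integral>\<^sup>+ a. emeasure (p x a \<mu>) B \<partial>(\<pi> x) \<partial>?S"
    proof (rule nn_integral_cong)
      fix x
      have "emeasure (?K x) B = \<integral>\<^sup>+ a. emeasure (P x a) B \<partial>(\<pi> x)"
        by (rule emeasure_bind_prob_algebra[OF policy_AE(4)[OF \<pi> A] Pxm B])
      also have "\<dots> = \<integral>\<^sup>+ a. emeasure (p x a \<mu>) B \<partial>(\<pi> x)"
        using policy_AE(3)[OF \<pi> A, of x] by (intro nn_integral_cong_AE) (auto simp: pP)
      finally show "emeasure (?K x) B = \<integral>\<^sup>+ a. emeasure (p x a \<mu>) B \<partial>(\<pi> x)" .
    qed
    finally show "emeasure (bind ?S ?K) B = \<integral>\<^sup>+ x. \<integral>\<^sup>+ a. emeasure (p x a \<mu>) B \<partial>(\<pi> x) \<partial>?S" .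
  qed
  finally show ?thesis by simp
qed

lemma state_law_space:
  fixes p :: "'x::topological_space \<Rightarrow> 'a::topological_space \<Rightarrow> 'x measure \<Rightarrow> 'x measure"
  assumes Pm: "(\<lambda>(x,a). P x a) \<in> borel \<Otimes>\<^sub>M borel \<rightarrow>\<^sub>M prob_algebra borel"
    and pP: "\<And>x a. a \<in> A \<Longrightarrow> p x a \<mu> = P x a"
    and A: "A \<in> sets borel"
    and \<pi>: "\<pi> \<in> Policies A"
    and S0: "\<mu>0 \<in> space (prob_algebra borel)"
  shows "state_law p \<pi> \<mu> \<mu>0 t \<in> space (prob_algebra borel)"
proof (induction t)
  case 0 then show ?case using S0 by simp
next
  case (Suc t)
  have \<pi>m: "\<pi> \<in> borel \<rightarrow>\<^sub>M prob_algebra borel" using \<pi> by (simp add: Policies_def)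
  have Km: "(\<lambda>x. bind (\<pi> x) (P x)) \<in> borel \<rightarrow>\<^sub>M prob_algebra borel"
    by (rule measurable_bind_prob_space2[OF \<pi>m Pm])
  show ?case
    apply (subst state_law_bind[where p=p and P=P, OF Pm pP A \<pi> Suc], assumption)
    using sets_bind'[OF Suc Km] prob_space_bind'[OF Suc Km] by (simp add: space_prob_algebra)
qed

lemma state_law_nn_integral:
  fixes p :: "'x::topological_space \<Rightarrow> 'a::topological_space \<Rightarrow> 'x measure \<Rightarrow> 'x measure"
  assumes Pm: "(\<lambda>(x,a). P x a) \<in> borel \<Otimes>\<^sub>M borel \<rightarrow>\<^sub>M prob_algebra borel"
    and pP: "\<And>x a. a \<in> A \<Longrightarrow> p x a \<mu> = P x a"
    and A: "A \<in> sets borel"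
    and \<pi>: "\<pi> \<in> Policies A"
    and S0: "\<mu>0 \<in> space (prob_algebra borel)"
    and g: "g \<in> borel_measurable borel"
  shows "(\<integral>\<^sup>+ y. g y \<partial>state_law p \<pi> \<mu> \<mu>0 (Suc t)) =
     (\<integral>\<^sup>+ x. \<integral>\<^sup>+ a. \<integral>\<^sup>+ y. g y \<partial>P x a \<partial>\<pi> x \<partial>state_law p \<pi> \<mu> \<mu>0 t)"
proof -
  let ?S = "state_law p \<pi> \<mu> \<mu>0 t"
  have S: "?S \<in> space (prob_algebra borel)" by (rule state_law_space[where p=p and P=P, OF Pm pP A \<pi> S0])
  then have Ss: "sets ?S = sets borel" by (simp add: space_prob_algebra)
  have \<pi>m: "\<pi> \<in> borel \<rightarrow>\<^sub>M prob_algebra borel" using \<pi> by (simp add: Policies_def)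
  have Km: "(\<lambda>x. bind (\<pi> x) (P x)) \<in> borel \<rightarrow>\<^sub>M prob_algebra borel"
    by (rule measurable_bind_prob_space2[OF \<pi>m Pm])
  have Km': "(\<lambda>x. bind (\<pi> x) (P x)) \<in> ?S \<rightarrow>\<^sub>M subprob_algebra borel"
    using measurable_prob_algebraD[OF Km] measurable_cong_sets[OF Ss refl] by blast
  have Pxm: "P x \<in> \<pi> x \<rightarrow>\<^sub>M subprob_algebra borel" for x
  proof -
    have e: "\<pi> x \<rightarrow>\<^sub>M subprob_algebra borel = borel \<rightarrow>\<^sub>M subprob_algebra borel"
      by (rule measurable_cong_sets[OF policy_AE(2)[OF \<pi> A] refl])
    show ?thesis unfolding e using measurable_prob_algebraD[OF measurable_Pair2[OF Pm, of x]] by simp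
  qed
  show ?thesis
    apply (subst state_law_bind[where p=p and P=P, OF Pm pP A \<pi> S], assumption)
    by (simp add: nn_integral_bind[OF g Km'] nn_integral_bind[OF g Pxm])
qed

theorem theorem2:
  fixes A :: "'a::euclidean_space set"
    and p :: "'x::polish_space \<Rightarrow> 'a \<Rightarrow> 'x measure \<Rightarrow> 'x measure"
    and c :: "'x \<Rightarrow> 'a \<Rightarrow> 'x measure \<Rightarrow> real"
    and w :: "'x \<Rightarrow> 'a \<Rightarrow> real"
    and DF :: "'x \<Rightarrow> ('x \<Rightarrow> real) \<Rightarrow> 'x measure \<Rightarrow> 'a \<Rightarrow> 'a"
    and \<beta> L1 L2 K1 K2 M \<alpha> \<rho> KF :: real
    and Qs :: "'x \<Rightarrow> 'a \<Rightarrow> real"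
    and \<mu>s :: "'x measure"
  defines "\<F> \<equiv> {v \<in> Lip (L2 / (1 - \<beta> * K2)) \<inter> Bnd w A (M / (1 - \<beta> * \<alpha>)). \<forall>x. 0 \<le> v x}"
  assumes A_compact: "compact A" and A_ne: "A \<noteq> {}"
    and beta: "0 < \<beta>" "\<beta> < 1"
    and consts_nonneg: "0 \<le> L1" "0 \<le> L2" "0 \<le> K1" "0 \<le> K2" "0 \<le> M" "0 \<le> \<alpha>" "0 \<le> KF"
    \<comment> \<open>measurability of p and c\<close>
    and p_meas: "(\<lambda>(x, a, \<mu>). p x a \<mu>) \<in>
        borel \<Otimes>\<^sub>M restrict_space borel A \<Otimes>\<^sub>M prob_algebra borel \<rightarrow>\<^sub>M prob_algebra borel"
    and c_meas: "(\<lambda>(x, a, \<mu>). c x a \<mu>) \<in>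
        borel_measurable (borel \<Otimes>\<^sub>M restrict_space borel A \<Otimes>\<^sub>M prob_algebra borel)"
    and c_nonneg: "\<And>x a \<mu>. a \<in> A \<Longrightarrow> \<mu> \<in> Prob \<Longrightarrow> 0 \<le> c x a \<mu>"
    \<comment> \<open>weight function\<close>
    and w_cont: "continuous_on (UNIV \<times> A) (\<lambda>(x, a). w x a)"
    and w_ge1: "\<And>x a. a \<in> A \<Longrightarrow> 1 \<le> w x a"
    \<comment> \<open>Assumption 1 (a)\<close>
    and c_cont: "\<And>xs as \<mu>ss x a \<mu>. (\<forall>n. as n \<in> A \<and> \<mu>ss n \<in> Prob) \<Longrightarrow> a \<in> A \<Longrightarrow> \<mu> \<in> Prob \<Longrightarrow>
        xs \<longlonglongrightarrow> x \<Longrightarrow> as \<longlonglongrightarrow> a \<Longrightarrow> weak_conv \<mu>ss \<mu> \<Longrightarrow>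
        (\<lambda>n. c (xs n) (as n) (\<mu>ss n)) \<longlonglongrightarrow> c x a \<mu>"
    and c_lip_mu: "\<And>x a \<mu> \<mu>'. a \<in> A \<Longrightarrow> \<mu> \<in> Prob \<Longrightarrow> \<mu>' \<in> Prob \<Longrightarrow>
        ennreal \<bar>c x a \<mu> - c x a \<mu>'\<bar> \<le> ennreal (L1 * w x a) * W1 \<mu> \<mu>'"
    and c_lip_x: "\<And>x x' a \<mu>. a \<in> A \<Longrightarrow> \<mu> \<in> Prob \<Longrightarrow>
        \<bar>c x a \<mu> - c x' a \<mu>\<bar> \<le> L2 * dist x x'"
    \<comment> \<open>Assumption 1 (b)\<close>
    and p_cont: "\<And>xs as \<mu>ss x a \<mu>. (\<forall>n. as n \<in> A \<and> \<mu>ss n \<in> Prob) \<Longrightarrow> a \<in> A \<Longrightarrow> \<mu> \<in> Prob \<Longrightarrow>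
        xs \<longlonglongrightarrow> x \<Longrightarrow> as \<longlonglongrightarrow> a \<Longrightarrow> weak_conv \<mu>ss \<mu> \<Longrightarrow>
        weak_conv (\<lambda>n. p (xs n) (as n) (\<mu>ss n)) (p x a \<mu>)"
    and p_lip_a_mu: "\<And>x a a' \<mu> \<mu>'. a \<in> A \<Longrightarrow> a' \<in> A \<Longrightarrow> \<mu> \<in> Prob \<Longrightarrow> \<mu>' \<in> Prob \<Longrightarrow>
        W1 (p x a \<mu>) (p x a' \<mu>') \<le> ennreal K1 * (ennreal (norm (a - a')) + W1 \<mu> \<mu>')"
    and p_lip_x_a: "\<And>x x' a a' \<mu>. a \<in> A \<Longrightarrow> a' \<in> A \<Longrightarrow> \<mu> \<in> Prob \<Longrightarrow>
        W1 (p x a \<mu>) (p x' a' \<mu>) \<le> ennreal (K2 * (dist x x' + norm (a - a')))"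
    \<comment> \<open>Assumption 1 (c)\<close>
    and A_convex: "convex A"
    \<comment> \<open>Assumption 1 (d)\<close>
    and c_bound: "\<And>x a \<mu>. a \<in> A \<Longrightarrow> \<mu> \<in> Prob \<Longrightarrow> c x a \<mu> \<le> M * w x a"
    and drift: "\<And>x a \<mu>. a \<in> A \<Longrightarrow> \<mu> \<in> Prob \<Longrightarrow>
        (\<integral>\<^sup>+ y. ennreal (wmax w A y) \<partial>(p x a \<mu>)) \<le> ennreal (\<alpha> * w x a)"
    \<comment> \<open>Assumption 1 (e): DF is the gradient of a \<mapsto> F(x,v,mu,a) on A\<close>
    and rho_pos: "0 < \<rho>"
    and F_deriv: "\<And>x v \<mu> a. v \<in> \<F> \<Longrightarrow> \<mu> \<in> Prob \<Longrightarrow> a \<in> A \<Longrightarrow>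
        ((\<lambda>b. Fop c p \<beta> x v \<mu> b) has_derivative (\<lambda>h. DF x v \<mu> a \<bullet> h)) (at a within A)"
    and F_strong_conv: "\<And>x v \<mu>. v \<in> \<F> \<Longrightarrow> \<mu> \<in> Prob \<Longrightarrow>
        strongly_convex_on A \<rho> (\<lambda>b. Fop c p \<beta> x v \<mu> b)"
    and DF_lip: "\<And>x x' v v' \<mu> \<mu>' a. v \<in> \<F> \<Longrightarrow> v' \<in> \<F> \<Longrightarrow> \<mu> \<in> Prob \<Longrightarrow> \<mu>' \<in> Prob \<Longrightarrow> a \<in> A \<Longrightarrow>
        ennreal (norm (DF x v \<mu> a - DF x' v' \<mu>' a))
          \<le> ennreal KF * (ennreal (dist x x' + wmax_norm w A (\<lambda>y. v y - v' y)) + W1 \<mu> \<mu>')"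
    \<comment> \<open>Assumption 2\<close>
    and assm2: "max (\<beta> * \<alpha> + KF / \<rho> * K1)
                    (L1 + \<beta> * (L2 / (1 - \<beta> * K2)) * K1 + (KF / \<rho> + 1) * K1 + K2 + KF / \<rho>) < 1"
    \<comment> \<open>(Q*, mu*) is a fixed point of H in C x P(X)\<close>
    and Qs_C: "Qs \<in> Cset w A M \<beta> \<alpha> L2 K2"
    and \<mu>s_P: "\<mu>s \<in> Prob"
    and fix1: "\<And>x a. a \<in> A \<Longrightarrow> H1 c p \<beta> A Qs \<mu>s x a = Qs x a"
    and fix2: "H2 c p \<beta> A Qs \<mu>s = \<mu>s"
  shows "(\<forall>x. \<exists>!a. a \<in> A \<and> (\<forall>b\<in>A. Qs x a \<le> Qs x b))
       \<and> is_MFE c p \<beta> A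
           (\<lambda>x. return borel (THE a. a \<in> A \<and> (\<forall>b\<in>A. Qs x a \<le> Qs x b))) \<mu>s"
proof -
  note Fdef = \<F>_def
  have Pr: "prob_space \<mu>s" "sets \<mu>s = sets borel" using \<mu>s_P by (auto simp: Prob_def)
  have \<mu>s_sp: "\<mu>s \<in> space (prob_algebra borel)" using Pr by (simp add: space_prob_algebra)
  have ba0: "0 \<le> \<beta> * \<alpha>" using beta consts_nonneg by simp
  have ba1: "\<beta> * \<alpha> < 1"
  proof -
    have "0 \<le> KF / \<rho> * K1" using consts_nonneg rho_pos by simp
    then show ?thesis using assm2 by linarith
  qed
  define K where "K = M / (1 - \<beta> * \<alpha>)"
  have K0: "0 \<le> K" unfolding K_def using ba1 consts_nonneg by simp
  define L where "L = L2 / (1 - \<beta> * K2)"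
  have Acl: "closed A" using A_compact by (rule compact_imp_closed)
  have Ab: "A \<in> sets borel" using Acl by simp
  have pm: "p x a \<mu>s \<in> space (prob_algebra borel)" if "a \<in> A" for x a
    using measurable_space[OF p_meas, of "(x, a, \<mu>s)"] that \<mu>s_sp
    by (simp add: space_pair_measure space_restrict_space)
  have pP: "prob_space (p x a \<mu>s)" "sets (p x a \<mu>s) = sets borel" if "a \<in> A" for x a
    using pm[OF that] by (auto simp: space_prob_algebra)
  define cp where "cp = closest_point A"
  have cpA: "cp a \<in> A" for a unfolding cp_def by (rule closest_point_in_set[OF Acl A_ne])
  have cpid: "a \<in> A \<Longrightarrow> cp a = a" for a unfolding cp_def by (rule closest_point_self)
  have cpc: "continuous_on UNIV cp" unfolding cp_def by (rule continuous_on_closest_point[OF A_convex Acl A_ne])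
  have cpm: "cp \<in> borel \<rightarrow>\<^sub>M restrict_space borel A"
    by (intro measurable_restrict_space2 borel_measurable_continuous_onI cpc) (auto simp: cpA)
  have trm: "(\<lambda>z. (fst z, cp (snd z), \<mu>s)) \<in> borel \<Otimes>\<^sub>M borel \<rightarrow>\<^sub>M
      borel \<Otimes>\<^sub>M restrict_space borel A \<Otimes>\<^sub>M prob_algebra borel"
    by (intro measurable_Pair measurable_fst measurable_compose[OF measurable_snd cpm]
        measurable_const \<mu>s_sp)
  define P where "P = (\<lambda>x a. p x (cp a) \<mu>s)"
  have Pm: "(\<lambda>(x,a). P x a) \<in> borel \<Otimes>\<^sub>M borel \<rightarrow>\<^sub>M prob_algebra borel"
    using measurable_compose[OF trm p_meas] unfolding P_def by (simp add: case_prod_beta)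
  have pPeq: "\<And>x a. a \<in> A \<Longrightarrow> p x a \<mu>s = P x a" unfolding P_def by (simp add: cpid)
  define cc where "cc = (\<lambda>x a. ennreal (c x (cp a) \<mu>s))"
  have ccm: "(\<lambda>(x,a). cc x a) \<in> borel_measurable (borel \<Otimes>\<^sub>M borel)"
    using measurable_compose[OF measurable_compose[OF trm c_meas] measurable_ennreal]
    unfolding cc_def by (simp add: case_prod_beta)
  have cceq: "\<And>x a. a \<in> A \<Longrightarrow> cc x a = ennreal (c x a \<mu>s)" unfolding cc_def by (simp add: cpid)

  define W where "W = wmax w A"
  have wcx: "continuous_on A (w x)" for x
  proof -
    have "continuous_on A ((\<lambda>(x, a). w x a) \<circ> (\<lambda>a. (x, a)))"
      by (intro continuous_on_compose continuous_intros continuous_on_subset[OF w_cont]) auto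
    then show ?thesis by (simp add: comp_def)
  qed
  have wbdd: "bdd_above (w x ` A)" for x
    by (rule bounded_imp_bdd_above) (rule compact_imp_bounded[OF compact_continuous_image[OF wcx A_compact]])
  have wW: "a \<in> A \<Longrightarrow> w x a \<le> W x" for x a
    unfolding W_def wmax_def by (rule cSUP_upper[OF _ wbdd])
  have W1: "1 \<le> W x" for x
  proof -
    obtain a where "a \<in> A" using A_ne by blast
    then show ?thesis using wW[of a x] w_ge1[of a x] by simp
  qed
  have Wm: "W \<in> borel_measurable borel"
    unfolding borel_measurable_iff_greater
  proof
    fix t
    have "{y \<in> space borel. t < W y} = (\<Union>a\<in>A. {y. t < w y a})"
      unfolding W_def wmax_def using less_cSUP_iff[OF A_ne wbdd] by auto
    moreover have "open {y. t < w y a}" if "a \<in> A" for a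
    proof -
      have "continuous_on UNIV (\<lambda>y. w y a)"
      proof -
        have "continuous_on UNIV ((\<lambda>(x, a). w x a) \<circ> (\<lambda>y. (y, a)))"
          by (intro continuous_on_compose continuous_intros continuous_on_subset[OF w_cont]) (auto simp: that)
        then show ?thesis by (simp add: comp_def)
      qed
      then show ?thesis using open_Collect_less[of "\<lambda>_. t" "\<lambda>y. w y a"] by simp
    qed
    then have "open (\<Union>a\<in>A. {y. t < w y a})" by (intro open_UN) auto
    ultimately show "{y \<in> space borel. t < W y} \<in> sets borel" by (metis borel_open)
  qed
  have driftW: "a \<in> A \<Longrightarrow> (\<integral>\<^sup>+ y. ennreal (W y) \<partial>p x a \<mu>s) \<le> ennreal (\<alpha> * w x a)" for x a
    unfolding W_def using drift \<mu>s_P by blast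
  define V where "V = Qmin A Qs"
  have Qs0: "\<And>x a. a \<in> A \<Longrightarrow> 0 \<le> Qs x a" and QsK: "\<And>x a. a \<in> A \<Longrightarrow> Qs x a \<le> K * w x a"
    and VL: "\<And>x y. \<bar>V x - V y\<bar> \<le> L * dist x y"
  proof -
    have C: "\<forall>x. \<forall>a\<in>A. 0 \<le> Qs x a \<and> \<bar>Qs x a\<bar> \<le> M / (1 - \<beta> * \<alpha>) * w x a"
      "\<forall>x y. \<bar>Qmin A Qs x - Qmin A Qs y\<bar> \<le> L2 / (1 - \<beta> * K2) * dist x y"
      using Qs_C unfolding Cset_def by blast+
    show "\<And>x a. a \<in> A \<Longrightarrow> 0 \<le> Qs x a" using C(1) by blast
    show "Qs x a \<le> K * w x a" if "a \<in> A" for x a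
    proof -
      have "\<bar>Qs x a\<bar> \<le> M / (1 - \<beta> * \<alpha>) * w x a" using C(1) that by blast
      then show ?thesis unfolding K_def by linarith
    qed
    show "\<And>x y. \<bar>V x - V y\<bar> \<le> L * dist x y" using C(2) unfolding L_def V_def by blast
  qed
  have Qbdd: "bdd_below (Qs x ` A)" for x using Qs0 by (auto simp: bdd_below_def)
  have V0: "0 \<le> V x" for x unfolding V_def Qmin_def by (rule cINF_greatest[OF A_ne Qs0])
  have VQ: "a \<in> A \<Longrightarrow> V x \<le> Qs x a" for x a unfolding V_def Qmin_def by (rule cINF_lower[OF Qbdd])
  have VW: "V x \<le> K * W x" for x
  proof -
    obtain a where a: "a \<in> A" using A_ne by blast
    have "V x \<le> K * w x a" using VQ[OF a, of x] QsK[OF a, of x] by linarith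
    also have "\<dots> \<le> K * W x" using wW[OF a] K0 by (simp add: mult_left_mono)
    finally show ?thesis .
  qed
  have Vc: "continuous_on UNIV V"
  proof -
    have "(max L 0)-lipschitz_on UNIV V"
    proof (rule lipschitz_onI)
      fix x y :: 'x
      have "\<bar>V x - V y\<bar> \<le> L * dist x y" by (rule VL)
      also have "\<dots> \<le> max L 0 * dist x y" by (simp add: mult_right_mono)
      finally show "dist (V x) (V y) \<le> max L 0 * dist x y" by (simp add: dist_real_def)
    qed simp
    then show ?thesis by (rule lipschitz_on_continuous_on)
  qed
  have Vm: "V \<in> borel_measurable borel" by (rule borel_measurable_continuous_onI[OF Vc])
  have VF: "V \<in> \<F>"
    unfolding Fdef Lip_def Bnd_def using Vc VL Vm V0 VW K0 W1
    by (auto simp: L_def K_def W_def)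

  have FopQ: "a \<in> A \<Longrightarrow> Fop c p \<beta> x V \<mu>s a = Qs x a" for x a
    using fix1[of a x] unfolding H1_def Fop_def V_def by simp
  have Fcont: "continuous_on A (\<lambda>b. Fop c p \<beta> x V \<mu>s b)" for x
    unfolding continuous_on_eq_continuous_within
    using has_derivative_continuous[OF F_deriv[OF VF \<mu>s_P]] by blast
  have Fsc: "strongly_convex_on A \<rho> (\<lambda>b. Fop c p \<beta> x V \<mu>s b)" for x
    by (rule F_strong_conv[OF VF \<mu>s_P])
  have uniqF: "\<exists>!a. a \<in> A \<and> (\<forall>b\<in>A. Fop c p \<beta> x V \<mu>s a \<le> Fop c p \<beta> x V \<mu>s b)" for x
    by (rule sc_unique_min[OF A_convex A_compact A_ne Fcont Fsc rho_pos])
  have predeq: "(a \<in> A \<and> (\<forall>b\<in>A. Qs x a \<le> Qs x b)) \<longleftrightarrow>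
      (a \<in> A \<and> (\<forall>b\<in>A. Fop c p \<beta> x V \<mu>s a \<le> Fop c p \<beta> x V \<mu>s b))" for x a
    using FopQ by auto
  have uniq: "\<exists>!a. a \<in> A \<and> (\<forall>b\<in>A. Qs x a \<le> Qs x b)" for x
    unfolding predeq by (rule uniqF)
  define f where "f = (\<lambda>x. THE a. a \<in> A \<and> (\<forall>b\<in>A. Qs x a \<le> Qs x b))"
  have fA: "f x \<in> A" and fmin: "\<forall>b\<in>A. Qs x (f x) \<le> Qs x b" for x
    using theI'[OF uniq[of x]] unfolding f_def by blast+
  have fV: "Qs x (f x) = V x" for x
  proof (rule antisym)
    show "V x \<le> Qs x (f x)" by (rule VQ[OF fA])
    show "Qs x (f x) \<le> V x" unfolding V_def Qmin_def by (rule cINF_greatest[OF A_ne]) (use fmin in blast)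
  qed
  have fminF: "\<forall>b\<in>A. Fop c p \<beta> x V \<mu>s (f x) \<le> Fop c p \<beta> x V \<mu>s b" for x
    using fmin[of x] fA[of x] FopQ by auto
  have DFl: "norm (DF x V \<mu>s a - DF x' V \<mu>s a) \<le> KF * dist x x'" if "a \<in> A" for x x' a
  proof -
    have "ennreal (norm (DF x V \<mu>s a - DF x' V \<mu>s a))
        \<le> ennreal KF * (ennreal (dist x x' + wmax_norm w A (\<lambda>y. V y - V y)) + W1 \<mu>s \<mu>s)"
      by (rule DF_lip[OF VF VF \<mu>s_P \<mu>s_P that])
    also have "\<dots> = ennreal (KF * dist x x')"
      by (simp add: W1_self[OF \<mu>s_P] wmax_norm_def ennreal_mult consts_nonneg)
    finally show ?thesis using consts_nonneg by (simp add: ennreal_le_iff)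
  qed
  have flip: "norm (f x - f x') \<le> KF / \<rho> * dist x x'" for x x'
  proof -
    let ?g = "\<lambda>y b. Fop c p \<beta> y V \<mu>s b"
    let ?D = "\<lambda>y b. DF y V \<mu>s b"
    let ?a = "f x" and ?b = "f x'"
    let ?N = "(norm (?b - ?a))\<^sup>2"
    have aA: "?a \<in> A" and bA: "?b \<in> A" by (rule fA)+
    have h1: "0 \<le> ?D x ?a \<bullet> (?b - ?a)"
      by (rule min_deriv_ineq[OF F_deriv[OF VF \<mu>s_P aA] A_convex aA bA fminF])
    have h2: "?D x ?a \<bullet> (?b - ?a) \<le> ?g x ?b - ?g x ?a - \<rho> / 2 * ?N"
      by (rule sc_deriv_ineq[OF F_deriv[OF VF \<mu>s_P aA] A_convex aA bA Fsc])
    have h3: "?D x ?b \<bullet> (?a - ?b) \<le> ?g x ?a - ?g x ?b - \<rho> / 2 * (norm (?a - ?b))\<^sup>2"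
      by (rule sc_deriv_ineq[OF F_deriv[OF VF \<mu>s_P bA] A_convex bA aA Fsc])
    have h4: "0 \<le> ?D x' ?b \<bullet> (?a - ?b)"
      by (rule min_deriv_ineq[OF F_deriv[OF VF \<mu>s_P bA] A_convex bA aA fminF])
    have nn: "norm (?a - ?b) = norm (?b - ?a)" by (rule norm_minus_commute)
    have "\<rho> * ?N \<le> (?D x ?b - ?D x' ?b) \<bullet> (?b - ?a)"
    proof -
      have "?D x ?b \<bullet> (?a - ?b) = - (?D x ?b \<bullet> (?b - ?a))"
        by (metis inner_minus_right minus_diff_eq)
      moreover have "?D x' ?b \<bullet> (?a - ?b) = - (?D x' ?b \<bullet> (?b - ?a))"
        by (metis inner_minus_right minus_diff_eq)
      ultimately show ?thesis using h1 h2 h3 h4 nn by (simp add: inner_diff_left)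
    qed
    also have "\<dots> \<le> norm (?D x ?b - ?D x' ?b) * norm (?b - ?a)" by (rule norm_cauchy_schwarz)
    also have "\<dots> \<le> KF * dist x x' * norm (?b - ?a)" by (intro mult_right_mono DFl bA) simp
    finally have ineq: "\<rho> * ?N \<le> KF * dist x x' * norm (?b - ?a)" .
    show ?thesis
    proof (cases "norm (?b - ?a) = 0")
      case True then show ?thesis using nn consts_nonneg rho_pos by simp
    next
      case False
      then have pos: "0 < norm (?b - ?a)" by simp
      from ineq have "\<rho> * norm (?b - ?a) * norm (?b - ?a) \<le> KF * dist x x' * norm (?b - ?a)"
        by (simp add: power2_eq_square mult.assoc)
      then have "\<rho> * norm (?b - ?a) \<le> KF * dist x x'" using pos by simp
      then show ?thesis using nn rho_pos by (simp add: field_simps)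
    qed
  qed
  have fc: "continuous_on UNIV f"
  proof -
    have "(KF / \<rho>)-lipschitz_on UNIV f"
      by (rule lipschitz_onI) (use flip consts_nonneg rho_pos in \<open>auto simp: dist_norm\<close>)
    then show ?thesis by (rule lipschitz_on_continuous_on)
  qed
  have fm: "f \<in> borel \<rightarrow>\<^sub>M borel" by (rule borel_measurable_continuous_onI[OF fc])

  have Vmp: "V \<in> borel_measurable (p x a \<mu>s)" if "a \<in> A" for x a
    using Vm measurable_cong_sets[OF pP(2)[OF that] refl] by blast
  have Wmp: "W \<in> borel_measurable (p x a \<mu>s)" if "a \<in> A" for x a
    using Wm measurable_cong_sets[OF pP(2)[OF that] refl] by blast
  have intV: "(\<integral>\<^sup>+ y. ennreal (V y) \<partial>p x a \<mu>s) \<le> ennreal (K * (\<alpha> * w x a))" if a: "a \<in> A" for x a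
  proof -
    have "(\<integral>\<^sup>+ y. ennreal (V y) \<partial>p x a \<mu>s) \<le> (\<integral>\<^sup>+ y. ennreal K * ennreal (W y) \<partial>p x a \<mu>s)"
    proof (intro nn_integral_mono)
      fix y
      have "ennreal (V y) \<le> ennreal (K * W y)" using VW[of y] by (rule ennreal_leI)
      moreover have "0 \<le> W y" using W1[of y] by simp
      ultimately show "ennreal (V y) \<le> ennreal K * ennreal (W y)" using K0 by (simp add: ennreal_mult)
    qed
    also have "\<dots> = ennreal K * (\<integral>\<^sup>+ y. ennreal (W y) \<partial>p x a \<mu>s)"
      by (rule nn_integral_cmult) (use Wmp[OF a] in simp)
    also have "\<dots> \<le> ennreal K * ennreal (\<alpha> * w x a)" by (intro mult_left_mono driftW a) simp
    also have "\<dots> = ennreal (K * (\<alpha> * w x a))"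
      using K0 consts_nonneg w_ge1[OF a, of x] by (simp add: ennreal_mult)
    finally show ?thesis .
  qed
  have QE: "ennreal (Qs x a) = ennreal (c x a \<mu>s) + ennreal \<beta> * (\<integral>\<^sup>+ y. ennreal (V y) \<partial>p x a \<mu>s)"
    if a: "a \<in> A" for x a
  proof -
    have fin: "(\<integral>\<^sup>+ y. ennreal (V y) \<partial>p x a \<mu>s) < \<infinity>"
      using intV[OF a, of x] by (simp add: order_le_less_trans)
    have int: "integrable (p x a \<mu>s) V"
      by (rule integrableI_nonneg[OF Vmp[OF a]]) (use V0 fin in auto)
    have eq: "(\<integral>\<^sup>+ y. ennreal (V y) \<partial>p x a \<mu>s) = ennreal (integral\<^sup>L (p x a \<mu>s) V)"
      by (rule nn_integral_eq_integral[OF int]) (use V0 in auto)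
    have I0: "0 \<le> integral\<^sup>L (p x a \<mu>s) V" by (rule integral_nonneg_AE) (use V0 in auto)
    have q: "Qs x a = c x a \<mu>s + \<beta> * integral\<^sup>L (p x a \<mu>s) V"
      using fix1[OF a, of x] unfolding H1_def V_def by simp
    have c0: "0 \<le> c x a \<mu>s" by (rule c_nonneg[OF a \<mu>s_P])
    have bI: "0 \<le> \<beta> * integral\<^sup>L (p x a \<mu>s) V" using I0 beta by simp
    have "ennreal (Qs x a) = ennreal (c x a \<mu>s) + ennreal (\<beta> * integral\<^sup>L (p x a \<mu>s) V)"
      unfolding q by (rule ennreal_plus[OF c0 bI])
    also have "ennreal (\<beta> * integral\<^sup>L (p x a \<mu>s) V) = ennreal \<beta> * ennreal (integral\<^sup>L (p x a \<mu>s) V)"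
      using I0 beta by (intro ennreal_mult) auto
    finally show ?thesis unfolding eq .
  qed
  define \<pi>s where "\<pi>s = (\<lambda>x. return borel (f x))"
  have \<pi>s_eq: "(\<lambda>x. return borel (THE a. a \<in> A \<and> (\<forall>b\<in>A. Qs x a \<le> Qs x b))) = \<pi>s"
    unfolding \<pi>s_def f_def ..
  have \<pi>s_pol: "\<pi>s \<in> Policies A"
    unfolding Policies_def \<pi>s_def
    using measurable_compose[OF fm measurable_return_prob_space] Ab fA by (auto simp: emeasure_return)
  have Lam: "\<mu>s \<in> Lambda p \<pi>s"
    unfolding Lambda_def
  proof (intro CollectI conjI ballI)
    show "\<mu>s \<in> Prob" by (rule \<mu>s_P)
    fix B :: "'x set" assume B: "B \<in> sets borel"
    have fsel: "fsel c p \<beta> A x Qs \<mu>s = f x" for x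
      unfolding fsel_def f_def V_def[symmetric] predeq ..
    let ?h = "\<lambda>B. \<integral>\<^sup>+ x. emeasure (p x (f x) \<mu>s) B \<partial>\<mu>s"
    have H2eq: "\<mu>s = measure_of UNIV (sets borel) ?h"
      using fix2 unfolding H2_def fsel by simp
    have ms: "measure_space UNIV (sigma_sets UNIV (sets borel)) ?h"
    proof (rule ccontr)
      assume "\<not> ?thesis"
      then have "emeasure \<mu>s UNIV = 0"
        by (subst H2eq) (simp add: emeasure_measure_of_conv)
      moreover have "emeasure \<mu>s UNIV = 1"
        using prob_space.emeasure_space_1[OF Pr(1)] sets_eq_imp_space_eq[OF Pr(2)] by simp
      ultimately show False by simp
    qed
    have "emeasure \<mu>s B = ?h B"
      using ms B by (subst H2eq) (simp add: emeasure_measure_of_conv sets.sigma_sets_eq[of borel, simplified])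
    also have "\<dots> = (\<integral>\<^sup>+ x. \<integral>\<^sup>+ a. emeasure (p x a \<mu>s) B \<partial>\<pi>s x \<partial>\<mu>s)"
      unfolding \<pi>s_def by (simp add: nn_integral_return_any)
    finally show "emeasure \<mu>s B = (\<integral>\<^sup>+ x. \<integral>\<^sup>+ a. emeasure (p x a \<mu>s) B \<partial>\<pi>s x \<partial>\<mu>s)" .
  qed

  define SL where "SL = (\<lambda>\<pi> t. state_law p \<pi> \<mu>s \<mu>s t)"
  define CC where "CC = (\<lambda>\<pi> t. \<integral>\<^sup>+ x. \<integral>\<^sup>+ a. ennreal (c x a \<mu>s) \<partial>\<pi> x \<partial>SL \<pi> t)"
  have Jeq: "Jcost c p \<beta> \<pi> \<mu>s \<mu>s = (\<Sum>t. ennreal (\<beta> ^ t) * CC \<pi> t)" for \<pi>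
    unfolding Jcost_def CC_def SL_def ..
  have SLsp: "SL \<pi> t \<in> space (prob_algebra borel)" if "\<pi> \<in> Policies A" for \<pi> t
    unfolding SL_def by (rule state_law_space[where p=p and P=P, OF Pm pPeq Ab that \<mu>s_sp])
  have SLsets: "sets (SL \<pi> t) = sets borel" if "\<pi> \<in> Policies A" for \<pi> t
    using SLsp[OF that] by (simp add: space_prob_algebra)
  have SL0: "SL \<pi> 0 = \<mu>s" for \<pi> unfolding SL_def by simp
  have nnS: "(\<integral>\<^sup>+ y. g y \<partial>SL \<pi> (Suc t)) = (\<integral>\<^sup>+ x. \<integral>\<^sup>+ a. \<integral>\<^sup>+ y. g y \<partial>P x a \<partial>\<pi> x \<partial>SL \<pi> t)"
    if "\<pi> \<in> Policies A" "g \<in> borel_measurable borel" for \<pi> t g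
    unfolding SL_def by (rule state_law_nn_integral[where p=p and P=P, OF Pm pPeq Ab that(1) \<mu>s_sp that(2)])
  have Psub: "(\<lambda>(x,a). P x a) \<in> borel \<Otimes>\<^sub>M borel \<rightarrow>\<^sub>M subprob_algebra borel"
    by (rule measurable_prob_algebraD[OF Pm])
  have Pint: "(\<lambda>(x,a). \<integral>\<^sup>+ y. g y \<partial>P x a) \<in> borel_measurable (borel \<Otimes>\<^sub>M borel)"
    if "g \<in> borel_measurable borel" for g
  proof -
    have "(\<lambda>z. integral\<^sup>N ((\<lambda>(x,a). P x a) z) g) \<in> borel_measurable (borel \<Otimes>\<^sub>M borel)"
      by (rule measurable_compose[OF Psub nn_integral_measurable_subprob_algebra[OF that]])
    then show ?thesis by (simp add: case_prod_beta)
  qed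
  have secm: "h x \<in> borel_measurable (\<pi> x)"
    if "\<pi> \<in> Policies A" "(\<lambda>(x,a). h x a) \<in> borel_measurable (borel \<Otimes>\<^sub>M borel)" for \<pi> h x
  proof -
    have e: "borel_measurable (\<pi> x) = borel_measurable borel"
      by (rule measurable_cong_sets[OF policy_AE(2)[OF that(1) Ab] refl])
    show ?thesis unfolding e using measurable_Pair2[OF that(2), of x] by simp
  qed
  have polm: "(\<lambda>x. \<integral>\<^sup>+ a. h x a \<partial>\<pi> x) \<in> borel_measurable (SL \<pi> t)"
    if "\<pi> \<in> Policies A" "(\<lambda>(x,a). h x a) \<in> borel_measurable (borel \<Otimes>\<^sub>M borel)" for \<pi> h t
  proof -
    have \<pi>m: "\<pi> \<in> borel \<rightarrow>\<^sub>M subprob_algebra borel"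
      using that(1) measurable_prob_algebraD unfolding Policies_def by blast
    have e: "borel_measurable (SL \<pi> t) = borel_measurable borel"
      by (rule measurable_cong_sets[OF SLsets[OF that(1)] refl])
    show ?thesis unfolding e by (rule nn_integral_measurable_subprob_algebra2[OF that(2) \<pi>m])
  qed
  have SLm: "g \<in> borel_measurable (SL \<pi> t)" if "\<pi> \<in> Policies A" "g \<in> borel_measurable borel" for \<pi> t g
    using that(2) measurable_cong_sets[OF SLsets[OF that(1)] refl] by blast
  have Vem: "(\<lambda>y. ennreal (V y)) \<in> borel_measurable borel"
    by (rule measurable_compose[OF Vm measurable_ennreal])
  have gfm: "(\<lambda>x. (x, f x)) \<in> borel \<rightarrow>\<^sub>M borel \<Otimes>\<^sub>M borel"
    by (intro measurable_Pair measurable_ident_sets fm) simp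
  have rec: "(\<integral>\<^sup>+ y. ennreal (V y) \<partial>SL \<pi>s t) = CC \<pi>s t + ennreal \<beta> * (\<integral>\<^sup>+ y. ennreal (V y) \<partial>SL \<pi>s (Suc t))"
    for t
  proof -
    have m1: "(\<lambda>x. ennreal (c x (f x) \<mu>s)) \<in> borel_measurable (SL \<pi>s t)"
    proof -
      have "(\<lambda>x. cc x (f x)) \<in> borel_measurable borel"
        using measurable_compose[OF gfm ccm] by simp
      then show ?thesis using SLm[OF \<pi>s_pol] cceq[OF fA] by simp
    qed
    have m2: "(\<lambda>x. \<integral>\<^sup>+ y. ennreal (V y) \<partial>p x (f x) \<mu>s) \<in> borel_measurable (SL \<pi>s t)"
    proof -
      have "(\<lambda>x. \<integral>\<^sup>+ y. ennreal (V y) \<partial>P x (f x)) \<in> borel_measurable borel"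
        using measurable_compose[OF gfm Pint[OF Vem]] by simp
      then show ?thesis using SLm[OF \<pi>s_pol] pPeq[OF fA] by simp
    qed
    have "(\<integral>\<^sup>+ y. ennreal (V y) \<partial>SL \<pi>s t) = (\<integral>\<^sup>+ x. ennreal (Qs x (f x)) \<partial>SL \<pi>s t)"
      by (simp add: fV)
    also have "\<dots> = (\<integral>\<^sup>+ x. ennreal (c x (f x) \<mu>s) + ennreal \<beta> * (\<integral>\<^sup>+ y. ennreal (V y) \<partial>p x (f x) \<mu>s) \<partial>SL \<pi>s t)"
      by (simp add: QE[OF fA])
    also have "\<dots> = (\<integral>\<^sup>+ x. ennreal (c x (f x) \<mu>s) \<partial>SL \<pi>s t)
        + ennreal \<beta> * (\<integral>\<^sup>+ x. \<integral>\<^sup>+ y. ennreal (V y) \<partial>p x (f x) \<mu>s \<partial>SL \<pi>s t)"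
      using m1 m2 by (simp add: nn_integral_add nn_integral_cmult)
    also have "(\<integral>\<^sup>+ x. ennreal (c x (f x) \<mu>s) \<partial>SL \<pi>s t) = CC \<pi>s t"
      unfolding CC_def \<pi>s_def by (simp add: nn_integral_return_any)
    also have "(\<integral>\<^sup>+ x. \<integral>\<^sup>+ y. ennreal (V y) \<partial>p x (f x) \<mu>s \<partial>SL \<pi>s t) = (\<integral>\<^sup>+ y. ennreal (V y) \<partial>SL \<pi>s (Suc t))"
      unfolding nnS[OF \<pi>s_pol Vem] unfolding \<pi>s_def by (simp add: nn_integral_return_any pPeq[OF fA])
    finally show ?thesis .
  qed
  have iter: "(\<integral>\<^sup>+ y. ennreal (V y) \<partial>\<mu>s) = (\<Sum>s<n. ennreal (\<beta> ^ s) * CC \<pi>s s)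
      + ennreal (\<beta> ^ n) * (\<integral>\<^sup>+ y. ennreal (V y) \<partial>SL \<pi>s n)" for n
  proof (induction n)
    case 0 then show ?case by (simp add: SL0)
  next
    case (Suc n)
    have "ennreal (\<beta> ^ n) * (\<integral>\<^sup>+ y. ennreal (V y) \<partial>SL \<pi>s n)
        = ennreal (\<beta> ^ n) * CC \<pi>s n + ennreal (\<beta> ^ Suc n) * (\<integral>\<^sup>+ y. ennreal (V y) \<partial>SL \<pi>s (Suc n))"
    proof -
      have e: "ennreal (\<beta> ^ n) * ennreal \<beta> = ennreal (\<beta> ^ Suc n)"
        using beta by (simp add: ennreal_mult[symmetric] mult.commute)
      show ?thesis unfolding rec[of n] distrib_left mult.assoc[symmetric] e ..
    qed
    then show ?case using Suc by (simp add: add.assoc)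
  qed
  have upper: "Jcost c p \<beta> \<pi>s \<mu>s \<mu>s \<le> (\<integral>\<^sup>+ y. ennreal (V y) \<partial>\<mu>s)"
    unfolding Jeq suminf_eq_SUP
  proof (rule SUP_least)
    fix n
    show "(\<Sum>s<n. ennreal (\<beta> ^ s) * CC \<pi>s s) \<le> (\<integral>\<^sup>+ y. ennreal (V y) \<partial>\<mu>s)"
      unfolding iter[of n] by simp
  qed

  define U where "U = (\<lambda>n x. ennreal (V x - (\<beta> * \<alpha>) ^ n * K * W x))"
  have Um: "U n \<in> borel_measurable borel" for n
    unfolding U_def
    by (intro measurable_compose[OF _ measurable_ennreal] borel_measurable_diff borel_measurable_times
        borel_measurable_const Vm Wm)
  have W0: "0 \<le> W x" for x using W1[of x] by simp
  have e0: "0 \<le> (\<beta> * \<alpha>) ^ n * K" for n using ba0 K0 by simp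
  have ptw: "U (Suc n) x \<le> ennreal (c x a \<mu>s) + ennreal \<beta> * (\<integral>\<^sup>+ y. U n y \<partial>p x a \<mu>s)"
    if a: "a \<in> A" for n x a
  proof -
    let ?e = "(\<beta> * \<alpha>) ^ n * K"
    have "(\<integral>\<^sup>+ y. ennreal (V y) \<partial>p x a \<mu>s) \<le> (\<integral>\<^sup>+ y. U n y + ennreal (?e * W y) \<partial>p x a \<mu>s)"
    proof (intro nn_integral_mono)
      fix y show "ennreal (V y) \<le> U n y + ennreal (?e * W y)"
        unfolding U_def by (rule ennreal_le_split) (use e0[of n] W0[of y] in simp)
    qed
    also have "\<dots> = (\<integral>\<^sup>+ y. U n y \<partial>p x a \<mu>s) + (\<integral>\<^sup>+ y. ennreal ?e * ennreal (W y) \<partial>p x a \<mu>s)"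
    proof -
      have "U n \<in> borel_measurable (p x a \<mu>s)"
        using Um measurable_cong_sets[OF pP(2)[OF a] refl] by blast
      moreover have "(\<lambda>y. ennreal (?e * W y)) \<in> borel_measurable (p x a \<mu>s)"
        by (intro measurable_compose[OF _ measurable_ennreal] borel_measurable_times
            borel_measurable_const Wmp[OF a])
      ultimately show ?thesis using e0[of n] W0 by (simp add: nn_integral_add ennreal_mult)
    qed
    also have "(\<integral>\<^sup>+ y. ennreal ?e * ennreal (W y) \<partial>p x a \<mu>s) = ennreal ?e * (\<integral>\<^sup>+ y. ennreal (W y) \<partial>p x a \<mu>s)"
      by (rule nn_integral_cmult) (use Wmp[OF a] in simp)
    also have "\<dots> \<le> ennreal ?e * ennreal (\<alpha> * w x a)" by (intro mult_left_mono driftW a) simp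
    also have "\<dots> = ennreal (?e * (\<alpha> * w x a))"
      using e0[of n] consts_nonneg w_ge1[OF a, of x] by (simp add: ennreal_mult)
    finally have i1: "(\<integral>\<^sup>+ y. ennreal (V y) \<partial>p x a \<mu>s) \<le> (\<integral>\<^sup>+ y. U n y \<partial>p x a \<mu>s) + ennreal (?e * (\<alpha> * w x a))"
      by simp
    let ?R = "ennreal (c x a \<mu>s) + ennreal \<beta> * (\<integral>\<^sup>+ y. U n y \<partial>p x a \<mu>s)"
    have "ennreal (V x) \<le> ennreal (Qs x a)" by (intro ennreal_leI VQ a)
    also have "\<dots> = ennreal (c x a \<mu>s) + ennreal \<beta> * (\<integral>\<^sup>+ y. ennreal (V y) \<partial>p x a \<mu>s)" by (rule QE[OF a])
    also have "\<dots> \<le> ennreal (c x a \<mu>s) + ennreal \<beta> * ((\<integral>\<^sup>+ y. U n y \<partial>p x a \<mu>s) + ennreal (?e * (\<alpha> * w x a)))"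
      by (intro add_left_mono mult_left_mono i1) simp
    also have "\<dots> = ?R + ennreal (\<beta> * (?e * (\<alpha> * w x a)))"
      using beta e0[of n] consts_nonneg w_ge1[OF a, of x]
      by (simp add: distrib_left add.assoc ennreal_mult)
    also have "\<dots> \<le> ?R + ennreal ((\<beta> * \<alpha>) ^ Suc n * K * W x)"
    proof -
      have "\<beta> * (?e * (\<alpha> * w x a)) = (\<beta> * \<alpha>) ^ Suc n * K * w x a" by (simp add: algebra_simps)
      also have "\<dots> \<le> (\<beta> * \<alpha>) ^ Suc n * K * W x"
        using wW[OF a, of x] e0[of "Suc n"] by (intro mult_left_mono) auto
      finally show ?thesis by (intro add_left_mono ennreal_leI)
    qed
    finally have "ennreal (V x) \<le> ?R + ennreal ((\<beta> * \<alpha>) ^ Suc n * K * W x)" .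
    then show ?thesis unfolding U_def
      by (rule ennreal_minus_le) (use e0[of "Suc n"] W0[of x] in simp)
  qed
  have lower_step: "(\<integral>\<^sup>+ x. U (Suc n) x \<partial>SL \<pi> t) \<le> CC \<pi> t + ennreal \<beta> * (\<integral>\<^sup>+ x. U n x \<partial>SL \<pi> (Suc t))"
    if \<pi>: "\<pi> \<in> Policies A" for \<pi> n t
  proof -
    let ?I = "\<lambda>x a. \<integral>\<^sup>+ y. U n y \<partial>P x a"
    have Im: "(\<lambda>(x,a). ?I x a) \<in> borel_measurable (borel \<Otimes>\<^sub>M borel)" by (rule Pint[OF Um])
    have pt: "U (Suc n) x \<le> (\<integral>\<^sup>+ a. cc x a \<partial>\<pi> x) + ennreal \<beta> * (\<integral>\<^sup>+ a. ?I x a \<partial>\<pi> x)" for x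
    proof -
      have P1: "prob_space (\<pi> x)" by (rule policy_AE(1)[OF \<pi> Ab])
      have "U (Suc n) x = (\<integral>\<^sup>+ a. U (Suc n) x \<partial>\<pi> x)"
        using prob_space.emeasure_space_1[OF P1] by (simp add: nn_integral_const)
      also have "\<dots> \<le> (\<integral>\<^sup>+ a. cc x a + ennreal \<beta> * ?I x a \<partial>\<pi> x)"
      proof (rule nn_integral_mono_AE)
        show "AE a in \<pi> x. U (Suc n) x \<le> cc x a + ennreal \<beta> * ?I x a"
          using policy_AE(3)[OF \<pi> Ab, of x]
        proof (rule AE_mp, intro AE_I2 impI)
          fix a assume a: "a \<in> A"
          show "U (Suc n) x \<le> cc x a + ennreal \<beta> * ?I x a"
            using ptw[OF a, of n x] by (simp add: cceq[OF a] pPeq[OF a, symmetric])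
        qed
      qed
      also have "\<dots> = (\<integral>\<^sup>+ a. cc x a \<partial>\<pi> x) + ennreal \<beta> * (\<integral>\<^sup>+ a. ?I x a \<partial>\<pi> x)"
        using secm[OF \<pi> ccm, of x] secm[OF \<pi> Im, of x]
        by (simp add: nn_integral_add nn_integral_cmult)
      finally show ?thesis .
    qed
    have "(\<integral>\<^sup>+ x. U (Suc n) x \<partial>SL \<pi> t)
        \<le> (\<integral>\<^sup>+ x. (\<integral>\<^sup>+ a. cc x a \<partial>\<pi> x) + ennreal \<beta> * (\<integral>\<^sup>+ a. ?I x a \<partial>\<pi> x) \<partial>SL \<pi> t)"
      by (intro nn_integral_mono pt)
    also have "\<dots> = (\<integral>\<^sup>+ x. \<integral>\<^sup>+ a. cc x a \<partial>\<pi> x \<partial>SL \<pi> t) + ennreal \<beta> * (\<integral>\<^sup>+ x. \<integral>\<^sup>+ a. ?I x a \<partial>\<pi> x \<partial>SL \<pi> t)"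
      using polm[OF \<pi> ccm, of t] polm[OF \<pi> Im, of t]
      by (simp add: nn_integral_add nn_integral_cmult)
    also have "(\<integral>\<^sup>+ x. \<integral>\<^sup>+ a. cc x a \<partial>\<pi> x \<partial>SL \<pi> t) = CC \<pi> t"
      unfolding CC_def
    proof (rule nn_integral_cong, rule nn_integral_cong_AE)
      fix x show "AE a in \<pi> x. cc x a = ennreal (c x a \<mu>s)"
        using policy_AE(3)[OF \<pi> Ab, of x] by (rule AE_mp) (auto intro!: AE_I2 simp: cceq)
    qed
    also have "(\<integral>\<^sup>+ x. \<integral>\<^sup>+ a. ?I x a \<partial>\<pi> x \<partial>SL \<pi> t) = (\<integral>\<^sup>+ x. U n x \<partial>SL \<pi> (Suc t))"
      by (rule nnS[OF \<pi> Um, symmetric])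
    finally show ?thesis .
  qed
  have lower_iter: "(\<integral>\<^sup>+ x. U n x \<partial>SL \<pi> t) \<le> (\<Sum>s<n. ennreal (\<beta> ^ s) * CC \<pi> (t + s))"
    if \<pi>: "\<pi> \<in> Policies A" for \<pi> n t
  proof (induction n arbitrary: t)
    case 0
    have "U 0 x = 0" for x unfolding U_def using VW[of x] by (simp add: ennreal_eq_0_iff)
    then show ?case by simp
  next
    case (Suc n)
    have "(\<integral>\<^sup>+ x. U (Suc n) x \<partial>SL \<pi> t) \<le> CC \<pi> t + ennreal \<beta> * (\<integral>\<^sup>+ x. U n x \<partial>SL \<pi> (Suc t))"
      by (rule lower_step[OF \<pi>])
    also have "\<dots> \<le> CC \<pi> t + ennreal \<beta> * (\<Sum>s<n. ennreal (\<beta> ^ s) * CC \<pi> (Suc t + s))"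
      by (intro add_left_mono mult_left_mono Suc.IH) simp
    also have "\<dots> = (\<Sum>s<Suc n. ennreal (\<beta> ^ s) * CC \<pi> (t + s))"
    proof -
      have "ennreal \<beta> * (ennreal (\<beta> ^ s) * CC \<pi> (Suc t + s)) = ennreal (\<beta> ^ Suc s) * CC \<pi> (t + Suc s)" for s
        using beta by (simp add: mult.assoc[symmetric] ennreal_mult[symmetric])
      then show ?thesis unfolding sum.lessThan_Suc_shift sum_distrib_left by simp
    qed
    finally show ?case .
  qed
  have Uinc: "incseq U"
  proof (rule incseq_SucI, rule le_funI)
    fix n x
    have "(\<beta> * \<alpha>) ^ Suc n \<le> (\<beta> * \<alpha>) ^ n" using ba0 ba1 by (intro power_decreasing) auto
    then have "(\<beta> * \<alpha>) ^ Suc n * (K * W x) \<le> (\<beta> * \<alpha>) ^ n * (K * W x)"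
      using K0 W0[of x] by (intro mult_right_mono) auto
    then show "U n x \<le> U (Suc n) x" unfolding U_def by (intro ennreal_leI) (simp add: mult.assoc)
  qed
  have Usup: "(SUP n. U n x) = ennreal (V x)" for x
  proof -
    have "(\<lambda>n. U n x) \<longlonglongrightarrow> (SUP n. U n x)"
      using Uinc by (intro LIMSEQ_SUP) (simp add: incseq_def le_fun_def)
    moreover have "(\<lambda>n. U n x) \<longlonglongrightarrow> ennreal (V x - 0 * K * W x)"
      unfolding U_def using ba0 ba1
      by (intro tendsto_ennrealI tendsto_intros LIMSEQ_power_zero) simp
    ultimately show ?thesis by (simp add: LIMSEQ_unique)
  qed
  have lower: "(\<integral>\<^sup>+ y. ennreal (V y) \<partial>\<mu>s) \<le> Jcost c p \<beta> \<pi> \<mu>s \<mu>s" if \<pi>: "\<pi> \<in> Policies A" for \<pi>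
  proof -
    have "(\<integral>\<^sup>+ y. ennreal (V y) \<partial>\<mu>s) = (\<integral>\<^sup>+ y. (SUP n. U n y) \<partial>\<mu>s)" by (simp add: Usup)
    also have "\<dots> = (SUP n. \<integral>\<^sup>+ y. U n y \<partial>\<mu>s)"
      by (rule nn_integral_monotone_convergence_SUP[OF Uinc])
        (use Um measurable_cong_sets[OF Pr(2) refl] in blast)
    also have "\<dots> \<le> Jcost c p \<beta> \<pi> \<mu>s \<mu>s"
    proof (rule SUP_least)
      fix n
      have "(\<integral>\<^sup>+ y. U n y \<partial>\<mu>s) \<le> (\<Sum>s<n. ennreal (\<beta> ^ s) * CC \<pi> (0 + s))"
        using lower_iter[OF \<pi>, of 0 n] by (simp add: SL0)
      also have "\<dots> \<le> (\<Sum>s. ennreal (\<beta> ^ s) * CC \<pi> s)" by (simp add: sum_le_suminf)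
      finally show "(\<integral>\<^sup>+ y. U n y \<partial>\<mu>s) \<le> Jcost c p \<beta> \<pi> \<mu>s \<mu>s" unfolding Jeq .
    qed
    finally show ?thesis .
  qed
  have Psi: "\<pi>s \<in> Psi c p \<beta> A \<mu>s"
    unfolding Psi_def using \<pi>s_pol upper lower by (blast intro: order_trans)
  show ?thesis
    unfolding \<pi>s_eq is_MFE_def using uniq Psi Lam by blast
qed

end
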